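(* There are no semi-equivelar maps of types $(3^4,4^2)$ or $(3,4^4)$ on the closed surface of Euler characteristic $-1$. *)

theory Defs
  imports Main
begin

text \<open>Faces: a finite set F of lists; each face is a
  cycle of distinct vertices (length at least 3), read cyclically.\<close>

definition face_edges :: "'a list \<Rightarrow> 'a set set" where
  "face_edges f = {{f ! i, f ! (Suc i mod length f)} | i. i < length f}"

definition map_edges :: "'a list set \<Rightarrow> 'a set set" where
  "map_edges F = \<Union> (face_edges ` F)"

text \<open>This says the link of v is a single cycle.\<close>

definition face_cycle_at :: "'a list set \<Rightarrow> 'a \<Rightarrow> 'a list list \<Rightarrow> 'a list \<Rightarrow> bool" where
  "face_cycle_at F v fs us \<longleftrightarrow>
     length fs = length us \<and> length fs \<ge> 3 \<and> distinct fs \<and> distinct us \<and>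
     set fs = {f \<in> F. v \<in> set f} \<and>
     (\<forall>i < length fs. {v, us ! i} \<in> face_edges (fs ! i) \<and>
                       {v, us ! (Suc i mod length fs)} \<in> face_edges (fs ! i))"

definition map_connected :: "'a set \<Rightarrow> 'a list set \<Rightarrow> bool" where
  "map_connected V F \<longleftrightarrow>
     (\<forall>u\<in>V. \<forall>w\<in>V. (u, w) \<in> {(x, y). {x, y} \<in> map_edges F}\<^sup>*)"

definition polyhedral_map :: "'a set \<Rightarrow> 'a list set \<Rightarrow> bool" where
  "polyhedral_map V F \<longleftrightarrow>
     finite V \<and> finite F \<and>
     (\<forall>f\<in>F. distinct f \<and> length f \<ge> 3 \<and> set f \<subseteq> V) \<and>
     (\<forall>f\<in>F. \<forall>g\<in>F. f \<noteq> g \<longrightarrow>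
        set f \<inter> set g = {} \<or> card (set f \<inter> set g) = 1 \<or>
        set f \<inter> set g \<in> face_edges f \<inter> face_edges g) \<and>
     (\<forall>v\<in>V. \<exists>fs us. face_cycle_at F v fs us) \<and>
     map_connected V F"

definition euler_char :: "'a set \<Rightarrow> 'a list set \<Rightarrow> int" where
  "euler_char V F = int (card V) - int (card (map_edges F)) + int (card F)"

definition semi_equivelar_map :: "'a set \<Rightarrow> 'a list set \<Rightarrow> nat list \<Rightarrow> bool" where
  "semi_equivelar_map V F T \<longleftrightarrow>
     polyhedral_map V F \<and>
     (\<forall>v\<in>V. \<exists>fs us n. face_cycle_at F v fs us \<and>
        (map length fs = rotate n T \<or> map length fs = rotate n (rev T)))"

end

theory Submission imports Defs "HOL-Library.Multiset" begin

lemma fe_elem: "e \<in> face_edges f \<Longrightarrow> \<exists>i<length f. e = {f!i, f!(Suc i mod length f)}"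
  by (auto simp: face_edges_def)

lemma fe_I: "i < length f \<Longrightarrow> {f!i, f!(Suc i mod length f)} \<in> face_edges f"
  by (auto simp: face_edges_def)

lemma fe_finite: "finite (face_edges f)"
proof -
  have "face_edges f = (\<lambda>i. {f!i, f!(Suc i mod length f)}) ` {..<length f}"
    by (auto simp: face_edges_def)
  thus ?thesis by simp
qed

lemma fe_card:
  assumes "distinct f" "length f \<ge> 3" "e \<in> face_edges f"
  shows "card e = 2 \<and> e \<subseteq> set f"
proof -
  obtain i where i: "i < length f" "e = {f!i, f!(Suc i mod length f)}" using fe_elem[OF assms(3)] by blast
  have "Suc i mod length f \<noteq> i" using i assms(2)
    by (cases "Suc i < length f") (auto simp: mod_Suc)
  moreover have "0 < length f" using i(1) by linarith
  then have "Suc i mod length f < length f" by (rule mod_less_divisor)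
  ultimately have "f!i \<noteq> f!(Suc i mod length f)" using assms(1) i by (simp add: nth_eq_iff_index_eq)
  thus ?thesis using i \<open>Suc i mod length f < length f\<close> by auto
qed

lemma mod_pred: "j < L \<Longrightarrow> Suc j mod L = k \<Longrightarrow> j = (k + L - 1) mod L"
proof (cases "Suc j < L")
  case True
  assume "Suc j mod L = k" 
  then have "k = Suc j" using True by simp
  then show ?thesis using True by simp
next
  case False
  assume a: "j < L" "Suc j mod L = k"
  then have "Suc j = L" using False by simp
  then have "k = 0" using a by simp
  then show ?thesis using \<open>Suc j = L\<close> by simp
qed

lemma nb:
  assumes "distinct g" "length g \<ge> 3" "{v,w} \<in> face_edges g" "k < length g" "g!k = v"
  shows "w = g!(Suc k mod length g) \<or> w = g!((k + length g - 1) mod length g)"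
proof -
  let ?L = "length g"
  obtain j where j: "j < ?L" "{v,w} = {g!j, g!(Suc j mod ?L)}" using fe_elem[OF assms(3)] by blast
  have c2: "card {v,w} = 2" using fe_card[OF assms(1,2,3)] by simp
  have vw: "v \<noteq> w"
  proof
    assume "v = w" then have "card {v,w} = 1" by simp
    then show False using c2 by simp
  qed
  have sj: "Suc j mod ?L < ?L" using j(1) mod_less_divisor[of "length g" "Suc j"] by linarith
  show ?thesis
  proof (cases "v = g!j")
    case True
    then have "j = k" using assms j by (simp add: nth_eq_iff_index_eq)
    then show ?thesis using j(2) vw True by (auto simp: doubleton_eq_iff)
  next
    case False
    then have "v = g!(Suc j mod ?L)" "w = g!j" using j(2) vw by (auto simp: doubleton_eq_iff)
    then have "Suc j mod ?L = k" using assms sj by (simp add: nth_eq_iff_index_eq)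
    then show ?thesis using mod_pred[OF j(1)] \<open>w = g!j\<close> by simp
  qed
qed

lemma double_count:
  assumes "finite V" "finite A" "\<And>x. x \<in> A \<Longrightarrow> g x \<subseteq> V"
  shows "(\<Sum>v\<in>V. card {x\<in>A. v \<in> g x}) = (\<Sum>x\<in>A. card (g x))"
proof -
  have c1: "card {x\<in>A. v \<in> g x} = (\<Sum>x\<in>A. if v \<in> g x then 1 else 0)" for v
    using sum.inter_filter[OF assms(2), of "\<lambda>_. 1::nat" "\<lambda>x. v \<in> g x"] by simp
  have c2: "(\<Sum>v\<in>V. if v \<in> g x then 1 else 0) = card (g x)" if xA: "x \<in> A" for x
  proof -
    have "{v\<in>V. v \<in> g x} = g x" using assms(3)[OF xA] by blast
    then show ?thesis using sum.inter_filter[OF assms(1), of "\<lambda>_. 1::nat" "\<lambda>v. v \<in> g x"] by simp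
  qed
  have "(\<Sum>v\<in>V. card {x\<in>A. v \<in> g x}) = (\<Sum>v\<in>V. \<Sum>x\<in>A. if v \<in> g x then 1 else 0)"
    using c1 by simp
  also have "\<dots> = (\<Sum>x\<in>A. \<Sum>v\<in>V. if v \<in> g x then 1 else 0)" by (rule sum.swap)
  also have "\<dots> = (\<Sum>x\<in>A. card (g x))" using c2 by simp
  finally show ?thesis .
qed

lemma mset_rot: "mset (rotate n xs) = mset xs"
proof (induction n)
  case (Suc n)
  have "mset (rotate1 ys) = mset ys" for ys :: "'a list" by (cases ys) auto
  then show ?case using Suc by (simp add: rotate_Suc)
qed simp

lemma semi_cycle:
  assumes "semi_equivelar_map V F T" "v \<in> V"
  shows "\<exists>fs us. face_cycle_at F v fs us \<and> mset (map length fs) = mset T"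
proof -
  obtain fs us n where "face_cycle_at F v fs us" "map length fs = rotate n T \<or> map length fs = rotate n (rev T)"
    using assms unfolding semi_equivelar_map_def by blast
  then show ?thesis by (metis mset_rev mset_rot)
qed

lemma faces_at_count:
  assumes "face_cycle_at F v fs us"
  shows "card {f\<in>F. v \<in> set f \<and> length f = k} = count (mset (map length fs)) k"
proof -
  have d: "distinct fs" and s: "set fs = {f \<in> F. v \<in> set f}" using assms by (auto simp: face_cycle_at_def)
  have "{f\<in>F. v \<in> set f \<and> length f = k} = set (filter (\<lambda>f. length f = k) fs)" using s by auto
  then have "card {f\<in>F. v \<in> set f \<and> length f = k} = length (filter (\<lambda>f. length f = k) fs)"
    using distinct_card[OF distinct_filter[OF d]] by metis
  also have "\<dots> = count (mset (map length fs)) k"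
    unfolding count_mset by (induction fs) auto
  finally show ?thesis .
qed

lemma edges_at:
  assumes "polyhedral_map V F" "face_cycle_at F v fs us"
  shows "{e \<in> map_edges F. v \<in> e} = (\<lambda>u. {v,u}) ` set us"
proof
  have L: "length fs = length us" "length fs \<ge> 3" and dus: "distinct us"
    and s: "set fs = {f \<in> F. v \<in> set f}"
    and E: "\<And>i. i < length fs \<Longrightarrow> {v, us ! i} \<in> face_edges (fs ! i) \<and>
                       {v, us ! (Suc i mod length fs)} \<in> face_edges (fs ! i)"
    using assms(2) by (auto simp: face_cycle_at_def)
  show "(\<lambda>u. {v,u}) ` set us \<subseteq> {e \<in> map_edges F. v \<in> e}"
  proof
    fix e assume "e \<in> (\<lambda>u. {v,u}) ` set us"
    then obtain i where i: "i < length us" "e = {v, us!i}" by (auto simp: in_set_conv_nth)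
    then have "fs ! i \<in> F" using s L nth_mem[of i fs] by auto
    then show "e \<in> {e \<in> map_edges F. v \<in> e}" using E[of i] i L by (auto simp: map_edges_def)
  qed
  show "{e \<in> map_edges F. v \<in> e} \<subseteq> (\<lambda>u. {v,u}) ` set us"
  proof
    fix e assume "e \<in> {e \<in> map_edges F. v \<in> e}"
    then obtain g where g: "g \<in> F" "e \<in> face_edges g" "v \<in> e" by (auto simp: map_edges_def)
    have gd: "distinct g" "length g \<ge> 3" using assms(1) g(1) by (auto simp: polyhedral_map_def)
    obtain j where j: "j < length g" "e = {g!j, g!(Suc j mod length g)}" using fe_elem[OF g(2)] by blast
    have "e \<subseteq> set g" using fe_card[OF gd g(2)] by simp
    then have vg: "v \<in> set g" using g by auto
    define w where "w = (if v = g!j then g!(Suc j mod length g) else g!j)"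
    have ew: "e = {v,w}" using g(3) j unfolding w_def by auto
    have "g \<in> set fs" using s g(1) vg by auto
    then obtain i where i: "i < length fs" "fs ! i = g" by (auto simp: in_set_conv_nth)
    obtain k where k: "k < length g" "g ! k = v" using vg by (auto simp: in_set_conv_nth)
    have w1: "us!i = g!(Suc k mod length g) \<or> us!i = g!((k + length g - 1) mod length g)"
      using nb[OF gd _ k] E[OF i(1)] i(2) by blast
    have w2: "us!(Suc i mod length fs) = g!(Suc k mod length g) \<or> us!(Suc i mod length fs) = g!((k + length g - 1) mod length g)"
      using nb[OF gd _ k] E[OF i(1)] i(2) by blast
    have w: "w = g!(Suc k mod length g) \<or> w = g!((k + length g - 1) mod length g)"
      using nb[OF gd _ k] g(2) ew by blast
    have ne: "i \<noteq> Suc i mod length fs" using i(1) L(2)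
      by (cases "Suc i < length fs") (auto simp: mod_Suc)
    have "us!i \<noteq> us!(Suc i mod length fs)"
    proof -
      have "0 < length us" using i(1) L by linarith
      then have "Suc i mod length us < length us" by (rule mod_less_divisor)
      then show ?thesis using dus ne i(1) L nth_eq_iff_index_eq[OF dus, of i "Suc i mod length fs"] by simp
    qed
    then have "w = us!i \<or> w = us!(Suc i mod length fs)" using w1 w2 w by (elim disjE) auto
    moreover have "i < length us" using i L by auto
    moreover have "Suc i mod length fs < length us" using i(1) L mod_less_divisor[of "length fs" "Suc i"] by linarith
    ultimately have "w \<in> set us" by (meson nth_mem)
    then show "e \<in> (\<lambda>u. {v,u}) ` set us" using ew by blast
  qed
qed

lemma edges_finite: "finite F \<Longrightarrow> finite (map_edges F)"
  by (simp add: map_edges_def fe_finite)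

lemma edge_count:
  assumes sem: "semi_equivelar_map V F T"
  shows "2 * card (map_edges F) = length T * card V"
proof -
  have P: "polyhedral_map V F" using sem by (simp add: semi_equivelar_map_def)
  have fV: "finite V" and fF: "finite F" and fd: "\<And>f. f \<in> F \<Longrightarrow> distinct f \<and> length f \<ge> 3 \<and> set f \<subseteq> V"
    using P by (auto simp: polyhedral_map_def)
  have fE: "finite (map_edges F)" using edges_finite[OF fF] .
  have eprops: "card e = 2 \<and> e \<subseteq> V" if eE: "e \<in> map_edges F" for e
  proof -
    obtain g where "g \<in> F" "e \<in> face_edges g" using eE unfolding map_edges_def by blast
    then show ?thesis using fe_card[of g e] fd[of g] by auto
  qed
  have "(\<Sum>v\<in>V. card {e\<in>map_edges F. v \<in> id e}) = (\<Sum>e\<in>map_edges F. card (id e))"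
    by (rule double_count[OF fV fE]) (use eprops in auto)
  also have "\<dots> = 2 * card (map_edges F)" using eprops by simp
  finally have 1: "(\<Sum>v\<in>V. card {e\<in>map_edges F. v \<in> e}) = 2 * card (map_edges F)" by simp
  have "card {e\<in>map_edges F. v \<in> e} = length T" if vV: "v \<in> V" for v
  proof -
    obtain fs us where c: "face_cycle_at F v fs us" "mset (map length fs) = mset T"
      using semi_cycle[OF sem vV] by blast
    have "inj_on (\<lambda>u. {v,u}) (set us)" by (auto simp: inj_on_def doubleton_eq_iff)
    then have "card {e\<in>map_edges F. v \<in> e} = card (set us)" using edges_at[OF P c(1)] card_image by metis
    also have "\<dots> = length us" using c(1) by (simp add: face_cycle_at_def distinct_card)
    also have "\<dots> = length fs" using c(1) by (simp add: face_cycle_at_def)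
    also have "\<dots> = length T" using c(2) by (metis length_map size_mset)
    finally show ?thesis .
  qed
  then have "(\<Sum>v\<in>V. card {e\<in>map_edges F. v \<in> e}) = length T * card V" by simp
  then show ?thesis using 1 by simp
qed

lemma face_count:
  assumes sem: "semi_equivelar_map V F T"
  shows "k * card {f\<in>F. length f = k} = count (mset T) k * card V"
proof -
  have P: "polyhedral_map V F" using sem by (simp add: semi_equivelar_map_def)
  have fV: "finite V" and fF: "finite F" and fd: "\<And>f. f \<in> F \<Longrightarrow> distinct f \<and> length f \<ge> 3 \<and> set f \<subseteq> V"
    using P by (auto simp: polyhedral_map_def)
  let ?A = "{f\<in>F. length f = k}"
  have fA: "finite ?A" using fF by simp
  have "(\<Sum>v\<in>V. card {f\<in>?A. v \<in> set f}) = (\<Sum>f\<in>?A. card (set f))"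
    by (rule double_count[OF fV fA]) (use fd in auto)
  also have "\<dots> = (\<Sum>f\<in>?A. k)" using fd by (intro sum.cong) (auto simp: distinct_card)
  also have "\<dots> = k * card ?A" by simp
  finally have 1: "(\<Sum>v\<in>V. card {f\<in>?A. v \<in> set f}) = k * card ?A" .
  have "card {f\<in>?A. v \<in> set f} = count (mset T) k" if vV: "v \<in> V" for v
  proof -
    obtain fs us where c: "face_cycle_at F v fs us" "mset (map length fs) = mset T"
      using semi_cycle[OF sem vV] by blast
    have "{f\<in>?A. v \<in> set f} = {f\<in>F. v \<in> set f \<and> length f = k}" by auto
    then show ?thesis using faces_at_count[OF c(1), of k] c(2) by simp
  qed
  then have "(\<Sum>v\<in>V. card {f\<in>?A. v \<in> set f}) = count (mset T) k * card V" by simp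
  then show ?thesis using 1 by simp
qed

lemma face_lengths:
  assumes sem: "semi_equivelar_map V F T" "f \<in> F"
  shows "length f \<in> set T"
proof -
  have P: "polyhedral_map V F" using sem by (simp add: semi_equivelar_map_def)
  have fd: "distinct f \<and> length f \<ge> 3 \<and> set f \<subseteq> V" using P assms(2) by (auto simp: polyhedral_map_def)
  then obtain v where v: "v \<in> set f" by (cases f) auto
  then have "v \<in> V" using fd by auto
  then obtain fs us where c: "face_cycle_at F v fs us" "mset (map length fs) = mset T"
    using semi_cycle[OF sem(1)] by blast
  have "f \<in> set fs" using c(1) v assms(2) by (auto simp: face_cycle_at_def)
  then have "length f \<in> set (map length fs)" by simp
  then show ?thesis using c(2) by (metis set_mset_mset)
qed

lemma nbrs_in:
  assumes P: "polyhedral_map V F" and c: "face_cycle_at F v fs us"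
  shows "set us \<subseteq> V - {v}"
proof
  fix u assume "u \<in> set us"
  then obtain i where i: "i < length us" "us!i = u" by (auto simp: in_set_conv_nth)
  have L: "length fs = length us" and s: "set fs = {f \<in> F. v \<in> set f}"
    and E: "{v, us ! i} \<in> face_edges (fs ! i)"
    using c i by (auto simp: face_cycle_at_def)
  have "fs ! i \<in> F" using s L i nth_mem[of i fs] by auto
  then have fd: "distinct (fs!i) \<and> length (fs!i) \<ge> 3 \<and> set (fs!i) \<subseteq> V" using P by (auto simp: polyhedral_map_def)
  then have "card {v,u} = 2 \<and> {v,u} \<subseteq> set (fs!i)" using fe_card[of "fs!i" "{v,u}"] E i by auto
  then show "u \<in> V - {v}" using fd by (cases "u = v") auto
qed

lemma sq:
  assumes "distinct f" "length f = 4" "e \<in> face_edges f" "f!0 \<in> e" "f!2 \<in> e"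
  shows False
proof -
  obtain j where j: "j < 4" "e = {f!j, f!(Suc j mod 4)}" using fe_elem[OF assms(3)] assms(2) by auto
  have d: "\<And>a b. a < 4 \<Longrightarrow> b < 4 \<Longrightarrow> f!a = f!b \<Longrightarrow> a = b" using assms(1,2) nth_eq_iff_index_eq by metis
  have m: "Suc j mod 4 < 4" by simp
  have "f!0 = f!j \<or> f!0 = f!(Suc j mod 4)" using assms(4) j(2) by blast
  then have h0: "0 = j \<or> 0 = Suc j mod 4" using d[of 0 j] d[of 0 "Suc j mod 4"] j(1) m by auto
  have "f!2 = f!j \<or> f!2 = f!(Suc j mod 4)" using assms(5) j(2) by blast
  then have h2: "2 = j \<or> 2 = Suc j mod 4" using d[of 2 j] d[of 2 "Suc j mod 4"] j(1) m by auto
  show False using h0 h2 j(1) by presburger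
qed

lemma arith_lem: "(n::int) - E + t + s = -1 \<Longrightarrow> 2*E = D \<Longrightarrow> 3*t = A \<Longrightarrow> 4*s = B \<Longrightarrow> 12*n - 6*D + 4*A + 3*B = -12"
  by linarith

lemma euler_eq:
  assumes sem: "semi_equivelar_map V F T" and T: "set T \<subseteq> {3,4}"
    and e: "euler_char V F = -1"
  shows "12 * int (card V) - 6 * (int (length T) * int (card V)) + 4 * (int (count (mset T) 3) * int (card V)) + 3 * (int (count (mset T) 4) * int (card V)) = -12"
proof -
  let ?F3 = "{f\<in>F. length f = 3}" and ?F4 = "{f\<in>F. length f = 4}"
  have fF: "finite F" using sem by (simp add: semi_equivelar_map_def polyhedral_map_def)
  have FU: "F = ?F3 \<union> ?F4" using face_lengths[OF sem] T by fastforce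
  have "?F3 \<inter> ?F4 = {}" by auto
  then have cF: "card F = card ?F3 + card ?F4" using fF FU card_Un_disjoint
    by (metis (no_types, lifting) finite_Un)
  have 1: "2 * card (map_edges F) = length T * card V" by (rule edge_count[OF sem])
  have 2: "3 * card ?F3 = count (mset T) 3 * card V" by (rule face_count[OF sem])
  have 3: "4 * card ?F4 = count (mset T) 4 * card V" by (rule face_count[OF sem])
  have e': "int (card V) - int (card (map_edges F)) + int (card ?F3) + int (card ?F4) = -1"
    using e cF by (simp add: euler_char_def)
  have q1: "2 * int (card (map_edges F)) = int (length T) * int (card V)" using arg_cong[OF 1, of int] by simp
  have q2: "3 * int (card ?F3) = int (count (mset T) 3) * int (card V)" using arg_cong[OF 2, of int] by simp
  have q3: "4 * int (card ?F4) = int (count (mset T) 4) * int (card V)" using arg_cong[OF 3, of int] by simp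
  show ?thesis using arith_lem[OF e' q1 q2 q3] .
qed

theorem mainTheorem11:
  fixes V :: "'a set" and F :: "'a list set"
  assumes "euler_char V F = -1"
  shows "\<not> semi_equivelar_map V F [3,3,3,3,4,4] \<and> \<not> semi_equivelar_map V F [3,4,4,4,4]"
proof
  show "\<not> semi_equivelar_map V F [3,3,3,3,4,4]"
  proof
    assume sem: "semi_equivelar_map V F [3,3,3,3,4,4]"
    have "12 * int (card V) - 6 * (int (length [3,3,3,3,4,4::nat]) * int (card V)) + 4 * (int (count (mset [3,3,3,3,4,4::nat]) 3) * int (card V)) + 3 * (int (count (mset [3,3,3,3,4,4::nat]) 4) * int (card V)) = -12"
      by (rule euler_eq[OF sem _ assms]) auto
    then have n: "card V = 6" by simp
    have P: "polyhedral_map V F" using sem by (simp add: semi_equivelar_map_def)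
    have fV: "finite V" using P by (simp add: polyhedral_map_def)
    obtain v where v: "v \<in> V" using n by fastforce
    obtain fs us where c: "face_cycle_at F v fs us" "mset (map length fs) = mset [3,3,3,3,4,4::nat]"
      using semi_cycle[OF sem v] by blast
    have "length fs = 6" using arg_cong[OF c(2), of size] by simp
    then have "length us = 6" using c(1) by (simp add: face_cycle_at_def)
    then have "card (set us) = 6" using c(1) by (simp add: face_cycle_at_def distinct_card)
    moreover have "card (set us) \<le> card (V - {v})" using nbrs_in[OF P c(1)] fV by (intro card_mono) auto
    ultimately show False using n v fV by simp
  qed
next
  show "\<not> semi_equivelar_map V F [3,4,4,4,4]"
  proof
    assume sem: "semi_equivelar_map V F [3,4,4,4,4]"
    have "12 * int (card V) - 6 * (int (length [3,4,4,4,4::nat]) * int (card V)) + 4 * (int (count (mset [3,4,4,4,4::nat]) 3) * int (card V)) + 3 * (int (count (mset [3,4,4,4,4::nat]) 4) * int (card V)) = -12"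
      by (rule euler_eq[OF sem _ assms]) auto
    then have n: "card V = 6" by simp
    have P: "polyhedral_map V F" using sem by (simp add: semi_equivelar_map_def)
    have fV: "finite V" and fd: "\<And>f. f \<in> F \<Longrightarrow> distinct f \<and> length f \<ge> 3 \<and> set f \<subseteq> V"
      and inter: "\<And>f g. f \<in> F \<Longrightarrow> g \<in> F \<Longrightarrow> f \<noteq> g \<Longrightarrow>
        set f \<inter> set g = {} \<or> card (set f \<inter> set g) = 1 \<or>
        set f \<inter> set g \<in> face_edges f \<inter> face_edges g"
      using P by (auto simp: polyhedral_map_def)
    obtain v where v: "v \<in> V" using n by fastforce
    obtain fs us where c: "face_cycle_at F v fs us" "mset (map length fs) = mset [3,4,4,4,4::nat]"
      using semi_cycle[OF sem v] by blast
    have "4 \<in> set (map length fs)" using arg_cong[OF c(2), of set_mset] by simp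
    then obtain f where f: "f \<in> set fs" "length f = 4" by auto
    have fF: "f \<in> F" using f c(1) by (auto simp: face_cycle_at_def)
    have fdf: "distinct f" "set f \<subseteq> V" using fd[OF fF] by auto
    define a where "a = f!0"
    define b where "b = f!2"
    have aV: "a \<in> V" "b \<in> V" using fdf f(2) unfolding a_def b_def by (auto intro!: subsetD[OF fdf(2)] nth_mem)
    have ab: "a \<noteq> b" using fdf f(2) unfolding a_def b_def by (simp add: nth_eq_iff_index_eq)
    obtain fs' us' where c': "face_cycle_at F a fs' us'" "mset (map length fs') = mset [3,4,4,4,4::nat]"
      using semi_cycle[OF sem aV(1)] by blast
    have "length fs' = 5" using arg_cong[OF c'(2), of size] by simp
    then have "card (set us') = 5" using c'(1) by (simp add: face_cycle_at_def distinct_card)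
    moreover have sub: "set us' \<subseteq> V - {a}" using nbrs_in[OF P c'(1)] .
    moreover have "card (V - {a}) = 5" using n aV fV by simp
    ultimately have "set us' = V - {a}" using fV by (metis card_subset_eq finite_Diff)
    then have "b \<in> set us'" using aV ab by auto
    then obtain i where i: "i < length us'" "us'!i = b" by (auto simp: in_set_conv_nth)
    have L: "length fs' = length us'" and s: "set fs' = {f \<in> F. a \<in> set f}"
      and E: "{a, b} \<in> face_edges (fs' ! i)"
      using c' i by (auto simp: face_cycle_at_def)
    define g where "g = fs'!i"
    have gF: "g \<in> F" using s L i nth_mem[of i fs] unfolding g_def by auto
    have gab: "{a,b} \<subseteq> set g" using fe_card[of g "{a,b}"] fd[OF gF] E unfolding g_def by auto
    show False
    proof (cases "g = f")
      case True
      then show False using sq[OF fdf(1) f(2) E[folded g_def, unfolded True]] unfolding a_def b_def by auto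
    next
      case False
      have abI: "{a,b} \<subseteq> set f \<inter> set g" using gab f(2) unfolding a_def b_def by auto
      have "card {a,b} \<le> card (set f \<inter> set g)" using abI by (intro card_mono) auto
      then have "card (set f \<inter> set g) \<ge> 2" using ab by simp
      moreover have "set f \<inter> set g \<noteq> {}" using abI by auto
      ultimately have "set f \<inter> set g \<in> face_edges f" using inter[OF fF gF False[symmetric]] by auto
      then show False using sq[OF fdf(1) f(2)] abI unfolding a_def b_def by auto
    qed
  qed
qed

end
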